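(* Let $A\in\mathbb{C}^{d\times d}$ be Hermitian positive-definite and let $M\in\mathbb{R}^{d\times d}$ be diagonal with positive diagonal entries. Let $\lambda_0>0$ be the smallest eigenvalue of the generalized eigenvalue problem $Az=\lambda Mz$. For $\lambda>0$ consider the energy $e:\mathbb{C}^d\to\mathbb{R}$, $$e(z)=\tfrac12\langle Az,z\rangle+\tfrac{\lambda}{4}\langle Mu,u\rangle,\qquad u_i=1-|z_i|^2\ (i=1,\dots,d),$$ where $\langle x,y\rangle=\mathrm{Re}\,(x^\dagger y)$. If $0<\lambda\le\lambda_0$, then the only critical point of $e$ (viewing $\mathbb{C}^d\cong\mathbb{R}^{2d}$) is $z=0$.
   Context: $x^\dagger$ denotes the conjugate transpose. Critical points are points where the gradient of $e$ with respect to the real and imaginary parts of $z$ vanishes. *)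

theory Defs
  imports "HOL-Analysis.Analysis"
begin

definition cinner :: "complex ^ 'n \<Rightarrow> complex ^ 'n \<Rightarrow> real" where
  "cinner x y = Re (\<Sum>i\<in>UNIV. cnj (x $ i) * y $ i)"

definition hermitian_mat :: "complex ^ 'n ^ 'n \<Rightarrow> bool" where
  "hermitian_mat A \<longleftrightarrow> (\<forall>i j. A $ i $ j = cnj (A $ j $ i))"

definition pos_def_herm :: "complex ^ 'n ^ 'n \<Rightarrow> bool" where
  "pos_def_herm A \<longleftrightarrow> hermitian_mat A \<and> (\<forall>z. z \<noteq> 0 \<longrightarrow> cinner (A *v z) z > 0)"

definition pos_diag_mat :: "real ^ 'n ^ 'n \<Rightarrow> bool" where
  "pos_diag_mat M \<longleftrightarrow> (\<forall>i j. i \<noteq> j \<longrightarrow> M $ i $ j = 0) \<and> (\<forall>i. M $ i $ i > 0)"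

definition gen_eigenvalue :: "complex ^ 'n ^ 'n \<Rightarrow> real ^ 'n ^ 'n \<Rightarrow> complex \<Rightarrow> bool" where
  "gen_eigenvalue A M mu \<longleftrightarrow>
     (\<exists>z. z \<noteq> 0 \<and> A *v z = mu *s ((\<chi> i j. complex_of_real (M $ i $ j)) *v z))"

definition energy :: "complex ^ 'n ^ 'n \<Rightarrow> real ^ 'n ^ 'n \<Rightarrow> real \<Rightarrow> complex ^ 'n \<Rightarrow> real" where
  "energy A M lam z =
     (let u = (\<chi> i. 1 - (cmod (z $ i))\<^sup>2) :: real ^ 'n
      in cinner (A *v z) z / 2 + lam / 4 * ((M *v u) \<bullet> u))"

text \<open>Critical point of a real-valued function on C^d viewed as R^(2d):
  the (Frechet) derivative w.r.t. real and imaginary parts vanishes.\<close>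
definition critical_point :: "(complex ^ 'n \<Rightarrow> real) \<Rightarrow> complex ^ 'n \<Rightarrow> bool" where
  "critical_point f z \<longleftrightarrow> (f has_derivative (\<lambda>h. 0)) (at z)"

end

theory Submission
  imports Defs
begin

lemma cinner_eq: "cinner x y = x \<bullet> y"
  unfolding cinner_def inner_vec_def Re_sum by (simp add: inner_complex_def)

lemma diag_mult: "pos_diag_mat M \<Longrightarrow> (M *v u) $ i = M $ i $ i * u $ i"
  unfolding pos_diag_mat_def matrix_vector_mult_def
  by (simp add: sum.remove[of UNIV i])

lemma cmod_sq_inner: "cmod x * cmod x = x \<bullet> x"
  by (metis power2_eq_square power2_norm_eq_inner)

lemma energy_alt:
  assumes "pos_diag_mat M"
  shows "energy A M lam = (\<lambda>z. (A *v z) \<bullet> z / 2 + lam / 4 * (\<Sum>i\<in>UNIV. M $ i $ i * (1 - z $ i \<bullet> z $ i)^2))"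
  unfolding energy_def Let_def cinner_eq
  by (auto simp: inner_vec_def diag_mult[OF assms] power2_eq_square cmod_sq_inner mult.assoc)

lemma energy_deriv:
  assumes "pos_diag_mat M"
  shows "(energy A M lam has_derivative (\<lambda>h. ((A *v z) \<bullet> h + (A *v h) \<bullet> z) / 2 + lam * (\<Sum>i\<in>UNIV. M $ i $ i * ((- (2 * (z $ i \<bullet> h $ i)) - 2 * (h $ i \<bullet> z $ i)) * (1 - z $ i \<bullet> z $ i))) / 4)) (at z)"
  unfolding energy_alt[OF assms]
  apply (rule derivative_eq_intros bounded_linear.has_derivative[OF bounded_linear_vec_nth] bounded_linear.has_derivative[OF matrix_vector_mul_bounded_linear] | simp)+
  done
definition cM :: "real ^ 'n ^ 'n \<Rightarrow> complex ^ 'n ^ 'n" where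
  "cM M = (\<chi> i j. complex_of_real (M $ i $ j))"

lemma inner_as_cnj: "x \<bullet> y = Re (\<Sum>i\<in>UNIV. cnj (x $ i) * y $ i)"
  using cinner_eq[of x y] unfolding cinner_def by simp

lemma herm_inner:
  assumes "hermitian_mat A"
  shows "(A *v x) \<bullet> y = x \<bullet> (A *v y)"
proof -
  have h: "\<And>i j. cnj (A $ i $ j) = A $ j $ i" using assms unfolding hermitian_mat_def
    by (metis complex_cnj_cnj)
  have "(\<Sum>i\<in>UNIV. cnj ((A *v x) $ i) * y $ i) = (\<Sum>i\<in>UNIV. \<Sum>j\<in>UNIV. A $ j $ i * cnj (x $ j) * y $ i)"
    unfolding matrix_vector_mult_def vec_lambda_beta cnj_sum sum_distrib_left sum_distrib_right by (simp add: h mult_ac)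
  also have "\<dots> = (\<Sum>j\<in>UNIV. \<Sum>i\<in>UNIV. A $ j $ i * cnj (x $ j) * y $ i)"
    by (rule sum.swap)
  also have "\<dots> = (\<Sum>j\<in>UNIV. cnj (x $ j) * (A *v y) $ j)"
    unfolding matrix_vector_mult_def vec_lambda_beta sum_distrib_left sum_distrib_right by (simp add: mult_ac)
  finally show ?thesis unfolding inner_as_cnj by simp
qed

lemma cM_herm: "pos_diag_mat M \<Longrightarrow> hermitian_mat (cM M)"
  unfolding hermitian_mat_def cM_def pos_diag_mat_def by (simp add: complex_cnj_complex_of_real) metis

lemma cM_mult: "pos_diag_mat M \<Longrightarrow> (cM M *v z) $ i = complex_of_real (M $ i $ i) * z $ i"
  unfolding pos_diag_mat_def matrix_vector_mult_def cM_def
  by (simp add: sum.remove[of UNIV i])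

lemma cM_quad: "pos_diag_mat M \<Longrightarrow> (cM M *v z) \<bullet> z = (\<Sum>i\<in>UNIV. M $ i $ i * (z $ i \<bullet> z $ i))"
  by (simp add: inner_vec_def cM_mult scaleR_conv_of_real[symmetric])

lemma P_nonneg: "pos_diag_mat M \<Longrightarrow> 0 \<le> (\<Sum>i\<in>UNIV. M $ i $ i * (z $ i \<bullet> z $ i))"
  unfolding pos_diag_mat_def by (intro sum_nonneg) (simp add: less_imp_le)

lemma P_pos: assumes "pos_diag_mat M" "z \<noteq> 0"
  shows "0 < (\<Sum>i\<in>UNIV. M $ i $ i * (z $ i \<bullet> z $ i))"
proof -
  obtain k where "z $ k \<noteq> 0" using assms(2) by (metis vec_eq_iff zero_index)
  hence "0 < M $ k $ k * (z $ k \<bullet> z $ k)" using assms(1) unfolding pos_diag_mat_def by simp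
  moreover have "\<forall>i\<in>UNIV. 0 \<le> M $ i $ i * (z $ i \<bullet> z $ i)"
    using assms(1) unfolding pos_diag_mat_def by (simp add: less_imp_le)
  ultimately show ?thesis
    by (metis (no_types, lifting) finite UNIV_I sum_pos2)
qed

lemma quad_neg: fixes c q t :: real assumes "q \<ge> 0" "c \<noteq> 0" "t = - c / (q + 1)"
  shows "2 * t * c + t * t * q < 0"
proof -
  have d: "q + 1 > 0" using assms by simp
  have "t * (q + 1) = - c" unfolding assms(3) using d by simp
  have "(2 * t * c + t * t * q) * ((q + 1) * (q + 1)) = 2 * c * (t * (q + 1)) * (q + 1) + (t * (q + 1)) * (t * (q + 1)) * q"
    by (simp add: algebra_simps)
  also have "\<dots> = - ((c * c) * (q + 2))" unfolding \<open>t * (q + 1) = - c\<close> by (simp add: algebra_simps)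
  finally have e: "(2 * t * c + t * t * q) * ((q + 1) * (q + 1)) = - ((c * c) * (q + 2))" .
  have "c * c > 0" using assms(2) by (simp add: zero_less_mult_iff) linarith
  hence "(c * c) * (q + 2) > 0" using assms(1) by (simp add: mult_pos_pos)
  hence "(2 * t * c + t * t * q) * ((q + 1) * (q + 1)) < 0" unfolding e by simp
  thus ?thesis using d by (simp add: mult_less_0_iff)
qed

lemma lagrange:
  fixes B :: "complex ^ 'n \<Rightarrow> complex ^ 'n"
  assumes lin: "linear B" and sym: "\<And>x y. B x \<bullet> y = x \<bullet> B y"
    and nn: "\<And>z. B z \<bullet> z \<ge> 0" and w: "B w \<bullet> w = 0"
  shows "B w = 0"
proof -
  have c0: "B w \<bullet> h = 0" for h
  proof (rule ccontr)
    assume c: "B w \<bullet> h \<noteq> 0"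
    define c where "c = B w \<bullet> h"
    define q where "q = B h \<bullet> h"
    have q: "q \<ge> 0" using nn q_def by simp
    define t where "t = - c / (q + 1)"
    have s1: "B h \<bullet> w = c" unfolding c_def using sym[of h w] by (simp add: inner_commute)
    have "B (w + t *\<^sub>R h) = B w + t *\<^sub>R B h"
      by (simp add: linear_add[OF lin] linear_cmul[OF lin])
    hence "B (w + t *\<^sub>R h) \<bullet> (w + t *\<^sub>R h) = B w \<bullet> w + t * (B w \<bullet> h) + t * (B h \<bullet> w) + t * t * (B h \<bullet> h)"
      by (simp add: inner_add_left inner_add_right algebra_simps)
    also have "\<dots> = 2 * t * c + t * t * q" using w s1 unfolding c_def q_def by simp
    also have "\<dots> < 0" using quad_neg[OF q c[folded c_def] t_def] .
    finally show False using nn[of "w + t *\<^sub>R h"] by simp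
  qed
  show ?thesis using c0[of "B w"] by simp
qed
lemma Avz_scale: "(A :: complex^'n^'n) *v (c *\<^sub>R x) = c *\<^sub>R (A *v x)"
  by (rule linear_cmul[OF bounded_linear.linear[OF matrix_vector_mul_bounded_linear]])

lemma rayleigh:
  fixes A :: "complex ^ 'n ^ 'n" and M :: "real ^ 'n ^ 'n"
  assumes A: "pos_def_herm A" and M: "pos_diag_mat M"
    and mn: "\<forall>mu::real. gen_eigenvalue A M (complex_of_real mu) \<longrightarrow> lam0 \<le> mu"
  shows "lam0 * (\<Sum>i\<in>UNIV. M $ i $ i * (z $ i \<bullet> z $ i)) \<le> (A *v z) \<bullet> z"
proof -
  define P where "P = (\<lambda>z::complex^'n. \<Sum>i\<in>UNIV. M $ i $ i * (z $ i \<bullet> z $ i))"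
  define R where "R = (\<lambda>z. (A *v z) \<bullet> z / P z)"
  define S where "S = sphere (0::complex^'n) 1"
  have cS: "compact S" and neS: "S \<noteq> {}" unfolding S_def by (auto simp: sphere_eq_empty)
  have Ppos: "P x > 0" if "x \<noteq> 0" for x unfolding P_def using P_pos[OF M that] .
  have PS: "P x \<noteq> 0" if "x \<in> S" for x
  proof -
    have "x \<noteq> 0" using that unfolding S_def by auto
    thus ?thesis using Ppos[of x] by simp
  qed
  have cont: "continuous_on S R" unfolding R_def
  proof (intro continuous_intros)
    show "continuous_on S P" unfolding P_def
      by (intro continuous_intros linear_continuous_on[OF bounded_linear_vec_nth])
  qed (use PS in auto)
  obtain w where w: "w \<in> S" "\<forall>y\<in>S. R w \<le> R y"
    using continuous_attains_inf[OF cS neS cont] by blast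
  define mu where "mu = R w"
  have Pscale: "P (c *\<^sub>R x) = c * c * P x" for c x
    unfolding P_def by (simp add: sum_distrib_left algebra_simps)
  have ge: "mu * P x \<le> (A *v x) \<bullet> x" for x
  proof (cases "x = 0")
    case True then show ?thesis by (simp add: P_def)
  next
    case False
    define c where "c = 1 / norm x"
    have c: "c \<noteq> 0" using False unfolding c_def by simp
    have "c *\<^sub>R x \<in> S" using False unfolding S_def c_def by simp
    hence "mu \<le> R (c *\<^sub>R x)" using w unfolding mu_def by blast
    also have "R (c *\<^sub>R x) = R x" unfolding R_def Pscale Avz_scale using c
      by (simp add: algebra_simps)
    finally have "mu \<le> (A *v x) \<bullet> x / P x" unfolding R_def .
    thus ?thesis using Ppos[OF False] by (simp add: pos_le_divide_eq)
  qed
  have w0: "w \<noteq> 0" using w(1) unfolding S_def by auto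
  have eq: "(A *v w) \<bullet> w - mu * P w = 0"
    using Ppos[OF w0] unfolding mu_def R_def by simp
  define B where "B = (\<lambda>x. A *v x - mu *\<^sub>R (cM M *v x))"
  have lin: "linear B" unfolding B_def
    by (rule linearI) (simp_all add: algebra_simps Avz_scale)
  have hA: "hermitian_mat A" using A unfolding pos_def_herm_def by simp
  have sym: "B x \<bullet> y = x \<bullet> B y" for x y
    unfolding B_def by (simp add: inner_diff_left inner_diff_right herm_inner[OF hA] herm_inner[OF cM_herm[OF M]])
  have nn: "B x \<bullet> x \<ge> 0" for x
    using ge[of x] unfolding B_def by (simp add: inner_diff_left cM_quad[OF M] P_def)
  have Bw: "B w \<bullet> w = 0"
    using eq unfolding B_def by (simp add: inner_diff_left cM_quad[OF M] P_def)
  have "B w = 0" using lagrange[OF lin sym nn Bw] .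
  hence "A *v w = complex_of_real mu *s ((\<chi> i j. complex_of_real (M $ i $ j)) *v w)"
  proof -
    have "A *v w = mu *\<^sub>R (cM M *v w)" using \<open>B w = 0\<close> unfolding B_def by simp
    hence "\<forall>i. (A *v w) $ i = mu *\<^sub>R (cM M *v w) $ i" by (simp add: vec_eq_iff)
    thus ?thesis unfolding cM_def by (simp add: vec_eq_iff scaleR_conv_of_real)
  qed
  hence "gen_eigenvalue A M (complex_of_real mu)" unfolding gen_eigenvalue_def using w0 by blast
  hence "lam0 \<le> mu" using mn by blast
  hence "lam0 * P z \<le> mu * P z" using P_nonneg[OF M, of z] unfolding P_def
    by (simp add: mult_right_mono)
  thus ?thesis using ge[of z] unfolding P_def by simp
qed
theorem lemmaC1:
  fixes A :: "complex ^ 'n ^ 'n" and M :: "real ^ 'n ^ 'n"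
    and lam0 lam :: real and z :: "complex ^ 'n"
  assumes "pos_def_herm A"
    and "pos_diag_mat M"
    and "lam0 > 0"
    and "gen_eigenvalue A M (complex_of_real lam0)"
    and "\<forall>mu::real. gen_eigenvalue A M (complex_of_real mu) \<longrightarrow> lam0 \<le> mu"
    and "0 < lam" and "lam \<le> lam0"
  shows "critical_point (energy A M lam) z \<longleftrightarrow> z = 0"
proof
  assume crit: "critical_point (energy A M lam) z"
  define wv where "wv = (\<lambda>i. z $ i \<bullet> z $ i)"
  define m where "m = (\<lambda>i. M $ i $ i)"
  have D0: "(\<lambda>h. ((A *v z) \<bullet> h + (A *v h) \<bullet> z) / 2 + lam * (\<Sum>i\<in>UNIV. M $ i $ i * ((- (2 * (z $ i \<bullet> h $ i)) - 2 * (h $ i \<bullet> z $ i)) * (1 - z $ i \<bullet> z $ i))) / 4) = (\<lambda>h. 0)"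
    using has_derivative_unique[OF energy_deriv[OF assms(2)] crit[unfolded critical_point_def]] .
  have e1: "((A *v z) \<bullet> z + (A *v z) \<bullet> z) / 2 + lam * (\<Sum>i\<in>UNIV. m i * ((- (2 * wv i) - 2 * wv i) * (1 - wv i))) / 4 = 0"
    using fun_cong[OF D0, of z] unfolding m_def wv_def .
  have e2: "(\<Sum>i\<in>UNIV. m i * ((- (2 * wv i) - 2 * wv i) * (1 - wv i))) = - 4 * (\<Sum>i\<in>UNIV. m i * wv i) + 4 * (\<Sum>i\<in>UNIV. m i * (wv i * wv i))"
    by (simp add: sum_distrib_left sum.distrib[symmetric] algebra_simps)
  have Q: "(A *v z) \<bullet> z = lam * (\<Sum>i\<in>UNIV. m i * wv i) - lam * (\<Sum>i\<in>UNIV. m i * (wv i * wv i))"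
    using e1[unfolded e2] by (simp add: field_simps)
  have R: "lam0 * (\<Sum>i\<in>UNIV. m i * wv i) \<le> (A *v z) \<bullet> z"
    using rayleigh[OF assms(1,2,5)] unfolding m_def wv_def .
  have Pn: "0 \<le> (\<Sum>i\<in>UNIV. m i * wv i)" using P_nonneg[OF assms(2)] unfolding m_def wv_def .
  have "lam * (\<Sum>i\<in>UNIV. m i * wv i) \<le> lam0 * (\<Sum>i\<in>UNIV. m i * wv i)"
    using Pn assms(7) by (simp add: mult_right_mono)
  hence "lam * (\<Sum>i\<in>UNIV. m i * (wv i * wv i)) \<le> 0" using Q R by linarith
  hence s0: "(\<Sum>i\<in>UNIV. m i * (wv i * wv i)) \<le> 0" using assms(6)
    by (simp add: mult_le_0_iff)
  have nn: "\<And>i. 0 \<le> m i * (wv i * wv i)" using assms(2) unfolding m_def pos_diag_mat_def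
    by (simp add: less_imp_le)
  have "(\<Sum>i\<in>UNIV. m i * (wv i * wv i)) = 0" using s0 nn by (meson antisym sum_nonneg)
  hence "\<forall>i\<in>UNIV. m i * (wv i * wv i) = 0" using nn by (simp add: sum_nonneg_eq_0_iff)
  hence "\<forall>i. z $ i = 0" using assms(2) unfolding m_def wv_def pos_diag_mat_def by (auto, metis less_irrefl)
  thus "z = 0" by (simp add: vec_eq_iff)
next
  assume "z = 0"
  then show "critical_point (energy A M lam) z"
    unfolding critical_point_def using energy_deriv[OF assms(2), of A lam z] by simp
qed
end
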